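(* Let $\mathbf{k}$ be an algebraically closed field of characteristic $0$, $G=\mathrm{GL}_2$, $(\rho,L)$ the $3$-dimensional irreducible rational representation $L=L(2\epsilon_1)$, $\underline{G}=G\ltimes_\rho L$, and $\underline{\mathcal{N}}=\mathcal{N}\times L$ where $\mathcal{N}$ is the nilpotent cone of $\mathfrak{gl}_2$. Let $J_2=\begin{pmatrix}0&1\\0&0\end{pmatrix}$, let $v_0\in L$ be a nonzero lowest weight vector and $v_i=\mathsf{d}\rho(J_2)^iv_0$ for $i=1,2$. Then $\underline{\mathcal{N}}$ is the disjoint union of exactly five $\underline{G}$-orbits, namely the orbits $\mathcal{O}_1,\dots,\mathcal{O}_5$ of $(0,0)$, $(0,v_0)$, $(0,v_0+v_2)$, $(J_2,0)$, $(J_2,v_0)$ respectively.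
   Context: $L(2\epsilon_1)$ can be realized as the quadratic forms in $x,y$ with $\mathrm{GL}_2$ acting by linear substitution. $\underline{G}$ is $G\times L$ with product $(g_1,v_1)(g_2,v_2)=(g_1g_2,\rho(g_1)v_2+v_1)$ and adjoint action $\mathrm{Ad}(g,v)(X,w)=(\mathrm{Ad}(g)X,-\mathsf{d}\rho(\mathrm{Ad}(g)X)v+\rho(g)w)$ on $\mathfrak{gl}_2\times L$. $\{v_0,v_1,v_2\}$ is a basis of $L$. *)

theory Defs
  imports "HOL-Analysis.Analysis" "HOL-Computational_Algebra.Polynomial"
begin

(* L = L(2 eps_1) realised as quadratic forms  a x^2 + b xy + c y^2  in x,y,
   stored as the coordinate vector (a,b,c) :: 'k^3 w.r.t. the basis x^2, xy, y^2.
   GL_2 acts by linear substitution (x,y) |-> (x,y) g, i.e.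
   x |-> g11 x + g21 y,  y |-> g12 x + g22 y  (this is Sym^2 of the standard rep). *)

definition rho :: "'k::field^2^2 \<Rightarrow> 'k^3 \<Rightarrow> 'k^3" where
  "rho g v = (let a = v$1; b = v$2; c = v$3;
                  g11 = g$1$1; g12 = g$1$2; g21 = g$2$1; g22 = g$2$2 in
     vector [a*g11^2 + b*g11*g12 + c*g12^2,
             2*a*g11*g21 + b*(g11*g22 + g21*g12) + 2*c*g12*g22,
             a*g21^2 + b*g21*g22 + c*g22^2])"

definition drho :: "'k::field^2^2 \<Rightarrow> 'k^3 \<Rightarrow> 'k^3" where
  "drho X v = (let a = v$1; b = v$2; c = v$3;
                  x11 = X$1$1; x12 = X$1$2; x21 = X$2$1; x22 = X$2$2 in
     vector [2*a*x11 + b*x12,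
             2*a*x21 + b*(x11 + x22) + 2*c*x12,
             b*x21 + 2*c*x22])"

definition J2 :: "'k::field^2^2" where
  "J2 = (\<chi> i j. if i = 1 \<and> j = 2 then 1 else 0)"

definition E21 :: "'k::field^2^2" where
  "E21 = (\<chi> i j. if i = 2 \<and> j = 1 then 1 else 0)"

definition diag2 :: "'k::field \<Rightarrow> 'k \<Rightarrow> 'k^2^2" where
  "diag2 t1 t2 = (\<chi> i j. if i = j then (if i = 1 then t1 else t2) else 0)"

(* nonzero lowest weight vector (Borel = upper triangular matrices, containing J2):
   a nonzero weight vector for the diagonal torus killed by the lowering operator E21 *)
definition lowest_weight_vector :: "'k::field^3 \<Rightarrow> bool" where
  "lowest_weight_vector v \<longleftrightarrow> v \<noteq> 0 \<and>
     (\<forall>t1 t2. t1 \<noteq> 0 \<and> t2 \<noteq> 0 \<longrightarrow> (\<exists>c. rho (diag2 t1 t2) v = c *s v)) \<and>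
     drho E21 v = 0"

definition nilcone :: "('k::field^2^2) set" where
  "nilcone = {X. \<exists>n. ((\<lambda>M. X ** M) ^^ n) (mat 1) = 0}"

(* adjoint action of the semidirect product G \<ltimes>_rho L (G = GL_2) on gl_2 \<times> L:
   Ad(g,v)(X,w) = (Ad(g)X, - d rho(Ad(g)X) v + rho(g) w) *)
definition Ad_semi :: "(('k::field^2^2) \<times> ('k^3)) \<Rightarrow> (('k^2^2) \<times> ('k^3)) \<Rightarrow> (('k^2^2) \<times> ('k^3))" where
  "Ad_semi gv Xw = (let g = fst gv; v = snd gv; X = fst Xw; w = snd Xw;
                        Y = g ** X ** matrix_inv g in
                    (Y, - drho Y v + rho g w))"

definition semi_orbit :: "(('k::field^2^2) \<times> ('k^3)) \<Rightarrow> (('k^2^2) \<times> ('k^3)) set" where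
  "semi_orbit p = {Ad_semi (g, v) p | g v. invertible g}"

end

theory Submission imports Defs begin
definition inv2 :: "'k::field^2^2 \<Rightarrow> 'k^2^2" where
 "inv2 g = (\<chi> i j. (if i = 1 \<and> j = 1 then g$2$2 else if i = 1 \<and> j = 2 then - g$1$2
     else if i = 2 \<and> j = 1 then - g$2$1 else g$1$1) * inverse (g$1$1 * g$2$2 - g$1$2 * g$2$1))"

lemmas ent = matrix_matrix_mult_def sum_2 vec_eq_iff forall_2 forall_3 det_2 mat_def rho_def drho_def Let_def inv2_def

lemma dinv: "det (g::'k::field^2^2) \<noteq> 0 \<Longrightarrow> (g$1$1 * g$2$2 - g$1$2 * g$2$1) * inverse (g$1$1 * g$2$2 - g$1$2 * g$2$1) = 1"
  by (simp add: det_2)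

lemma inv2_r: "det (g::'k::field^2^2) \<noteq> 0 \<Longrightarrow> g ** inv2 g = mat 1"
  apply (drule dinv)
  apply (simp add: ent)
  by algebra
lemma inv2_l: "det (g::'k::field^2^2) \<noteq> 0 \<Longrightarrow> inv2 g ** g = mat 1"
  apply (drule dinv)
  apply (simp add: ent)
  by algebra
lemma equiv: "det (h::'k::field^2^2) \<noteq> 0 \<Longrightarrow> rho h (drho Y v) = drho (h ** Y ** inv2 h) (rho h v)"
  apply (drule dinv)
  apply (simp add: ent)
  by algebra

lemma inv_lr: assumes "invertible (A::'k::field^2^2)"
  shows "A ** matrix_inv A = mat 1 \<and> matrix_inv A ** A = mat 1"
  using assms unfolding invertible_def matrix_inv_def by (rule someI_ex)

lemma minv_unique: assumes "(A::'k::field^2^2) ** (B::'k^2^2) = mat 1" "B ** A = mat 1"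
  shows "matrix_inv A = B"
proof -
  have inv: "invertible A" using assms invertible_def by blast
  have "matrix_inv A = matrix_inv A ** (A ** B)" using assms by simp
  also have "\<dots> = B" using inv_lr[OF inv] by (simp add: matrix_mul_assoc)
  finally show ?thesis .
qed

lemma minv: assumes "det (g::'k::field^2^2) \<noteq> 0" shows "matrix_inv g = inv2 g"
  by (rule minv_unique) (use assms inv2_r inv2_l in auto)

lemma minv_mult: assumes "invertible (h::'k::field^2^2)" "invertible (g::'k^2^2)"
  shows "matrix_inv (h ** g) = matrix_inv g ** matrix_inv h"
proof (rule minv_unique)
  have a: "h ** matrix_inv h = mat 1" "matrix_inv h ** h = mat 1" "g ** matrix_inv g = mat 1" "matrix_inv g ** g = mat 1"
    using inv_lr assms by auto
  have "h ** g ** (matrix_inv g ** matrix_inv h) = h ** (g ** matrix_inv g) ** matrix_inv h"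
    by (simp add: matrix_mul_assoc)
  then show "h ** g ** (matrix_inv g ** matrix_inv h) = mat 1" using a by simp
  have "matrix_inv g ** matrix_inv h ** (h ** g) = matrix_inv g ** (matrix_inv h ** h) ** g"
    by (simp add: matrix_mul_assoc)
  then show "matrix_inv g ** matrix_inv h ** (h ** g) = mat 1" using a by simp
qed

lemma minv_id: "matrix_inv (mat 1 :: 'k::field^2^2) = mat 1"
  by (rule minv_unique) simp_all

lemma invertible_minv: "invertible (A::'k::field^2^2) \<Longrightarrow> invertible (matrix_inv A)"
  using inv_lr invertible_def by blast

lemma equiv_inv: "invertible (h::'k::field^2^2) \<Longrightarrow> rho h (drho Y v) = drho (h ** Y ** matrix_inv h) (rho h v)"
  by (simp add: invertible_det_nz minv equiv)

lemma rho_hom: "rho (h::'k::field^2^2) (rho g w) = rho (h ** g) w"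
  by (simp add: ent algebra_simps power2_eq_square)
lemma rho_id: "rho (mat 1 :: 'k::field^2^2) w = w"
  by (simp add: ent)
lemma rho_add: "rho (h::'k::field^2^2) (x + y) = rho h x + rho h y"
  by (simp add: ent algebra_simps)
lemma rho_neg: "rho (h::'k::field^2^2) (- x) = - rho h x"
  by (simp add: ent algebra_simps)
lemma rho_diff: "rho (h::'k::field^2^2) (x - y) = rho h x - rho h y"
  by (simp add: ent algebra_simps)
lemma rho_0: "rho (h::'k::field^2^2) 0 = 0"
  by (simp add: ent)
lemma drho_add: "drho (Y::'k::field^2^2) (x + y) = drho Y x + drho Y y"
  by (simp add: ent algebra_simps)
lemma drho_0: "drho (Y::'k::field^2^2) 0 = 0"
  by (simp add: ent)
lemma drho_00: "drho (0::'k::field^2^2) v = 0"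
  by (simp add: ent)

lemma Ad_eq: "Ad_semi (g, v) (X, w) = (g ** X ** matrix_inv g, - drho (g ** X ** matrix_inv g) v + rho g w)"
  by (simp add: Ad_semi_def Let_def)

lemma Ad_comp: assumes "invertible (h::'k::field^2^2)" "invertible g"
  shows "Ad_semi (h, u) (Ad_semi (g, v) p) = Ad_semi (h ** g, rho h v + u) p"
proof -
  obtain X w where p: "p = (X, w)" by (cases p)
  have Z: "h ** (g ** X ** matrix_inv g) ** matrix_inv h = h ** g ** X ** matrix_inv (h ** g)"
    using minv_mult[OF assms] by (simp add: matrix_mul_assoc)
  show ?thesis unfolding p Ad_eq Z
    by (simp add: rho_add rho_neg rho_diff rho_hom drho_add equiv_inv[OF assms(1)] Z algebra_simps)
qed

lemma Ad_id: "Ad_semi (mat 1 :: 'k::field^2^2, 0) p = p"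
  by (cases p) (simp add: Ad_eq minv_id drho_0 rho_id)

lemma orbit_refl: "p \<in> semi_orbit (p :: ('k::field^2^2) \<times> ('k^3))"
  unfolding semi_orbit_def using Ad_id[of p] invertible_def
  by (metis (mono_tags, lifting) matrix_mul_lid mem_Collect_eq)

lemma orbit_sym: assumes "q \<in> semi_orbit (p :: ('k::field^2^2) \<times> ('k^3))" shows "p \<in> semi_orbit q"
proof -
  obtain g v where g: "invertible g" and q: "q = Ad_semi (g, v) p" using assms unfolding semi_orbit_def by blast
  have ig: "invertible (matrix_inv g)" using invertible_minv g by blast
  have "Ad_semi (matrix_inv g, - rho (matrix_inv g) v) q = p"
    unfolding q Ad_comp[OF ig g] using inv_lr[OF g] by (simp add: Ad_id)
  then show ?thesis unfolding semi_orbit_def using ig by blast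
qed

lemma orbit_sub: assumes "q \<in> semi_orbit (p :: ('k::field^2^2) \<times> ('k^3))" shows "semi_orbit q \<subseteq> semi_orbit p"
proof
  fix r assume "r \<in> semi_orbit q"
  then obtain h u where h: "invertible h" and r: "r = Ad_semi (h, u) q" unfolding semi_orbit_def by blast
  obtain g v where g: "invertible g" and q: "q = Ad_semi (g, v) p" using assms unfolding semi_orbit_def by blast
  have "r = Ad_semi (h ** g, rho h v + u) p" using r q Ad_comp[OF h g] by simp
  moreover have "invertible (h ** g)" using h g invertible_mult by blast
  ultimately show "r \<in> semi_orbit p" unfolding semi_orbit_def by blast
qed

lemma orbit_eq: "q \<in> semi_orbit (p :: ('k::field^2^2) \<times> ('k^3)) \<Longrightarrow> semi_orbit q = semi_orbit p"
  using orbit_sub orbit_sym by (metis subset_antisym)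


definition mk2 :: "'k::field \<Rightarrow> 'k \<Rightarrow> 'k \<Rightarrow> 'k \<Rightarrow> 'k^2^2" where
  "mk2 a b c d = (\<chi> i j. if i = 1 then (if j = 1 then a else b) else (if j = 1 then c else d))"

lemma mk2_simps[simp]: "mk2 a b c d $ 1 $ 1 = a" "mk2 a b c d $ 1 $ 2 = b" "mk2 a b c d $ 2 $ 1 = c" "mk2 a b c d $ 2 $ 2 = d"
  by (simp_all add: mk2_def)

lemma inv_det: "det (g::'k::field^2^2) \<noteq> 0 \<Longrightarrow> invertible g"
  by (simp add: invertible_det_nz)

lemma sqrt_ex: "\<exists>s. s^2 = (x::'k::alg_closed_field)"
  using nth_root_exists[of 2 x] by simp

lemma rank1_ex:
  fixes w :: "'k::{alg_closed_field, field_char_0}^3"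
  assumes "w \<noteq> 0" "(w$2)^2 = 4 * w$1 * w$3"
  shows "\<exists>g. invertible g \<and> rho g (vector [0,0,1]) = w"
proof (cases "w$1 = 0")
  case True
  then have b: "w$2 = 0" using assms(2) by simp
  then have c: "w$3 \<noteq> 0" using True assms(1) by (auto simp: vec_eq_iff forall_3)
  obtain s where s: "s^2 = w$3" using sqrt_ex by blast
  have "s \<noteq> 0" using s c by auto
  then have "invertible (mk2 1 0 0 s)" by (intro inv_det) (simp add: det_2)
  moreover have "rho (mk2 1 0 0 s) (vector [0,0,1]) = w"
    using True b s by (simp add: ent)
  ultimately show ?thesis by blast
next
  case False
  obtain s where s: "s^2 = w$1" using sqrt_ex by blast
  have s0: "s \<noteq> 0" using s False by auto
  then have "invertible (mk2 0 s 1 (w$2 / (2 * s)))" by (intro inv_det) (simp add: det_2)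
  moreover have "rho (mk2 0 s 1 (w$2 / (2 * s))) (vector [0,0,1]) = w"
    using s0 s assms(2) False by (simp add: ent field_simps power2_eq_square)
  ultimately show ?thesis by blast
qed

lemma rank2_ex:
  fixes w :: "'k::{alg_closed_field, field_char_0}^3"
  assumes "(w$2)^2 \<noteq> 4 * w$1 * w$3"
  shows "\<exists>g. invertible g \<and> rho g (vector [0,1,0]) = w"
proof (cases "w$1 = 0")
  case True
  then have b: "w$2 \<noteq> 0" using assms by simp
  then have "invertible (mk2 0 (w$2) 1 (w$3))" by (intro inv_det) (simp add: det_2)
  moreover have "rho (mk2 0 (w$2) 1 (w$3)) (vector [0,1,0]) = w"
    using True by (simp add: ent)
  ultimately show ?thesis by blast
next
  case False
  obtain s where s: "s^2 = (w$2)^2 - 4 * w$1 * w$3" using sqrt_ex by blast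
  have s0: "s \<noteq> 0" using s assms by auto
  have "det (mk2 (w$1) 1 ((w$2 - s)/2) ((w$2 + s)/(2 * w$1))) = s"
    using False by (simp add: det_2 field_simps)
  then have "invertible (mk2 (w$1) 1 ((w$2 - s)/2) ((w$2 + s)/(2 * w$1)))" using s0 inv_det by metis
  moreover have "rho (mk2 (w$1) 1 ((w$2 - s)/2) ((w$2 + s)/(2 * w$1))) (vector [0,1,0]) = w"
    using False s apply (simp add: ent field_simps power2_eq_square)
    apply algebra+ done
  ultimately show ?thesis by blast
qed

lemma nil_J:
  fixes X :: "'k::field^2^2"
  assumes "X ** X = 0" "X \<noteq> 0"
  shows "\<exists>g. invertible g \<and> g ** J2 = X ** g"
proof -
  have e: "X$1$1 * X$1$1 + X$1$2 * X$2$1 = 0" "X$1$1 * X$1$2 + X$1$2 * X$2$2 = 0"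
          "X$2$1 * X$1$1 + X$2$2 * X$2$1 = 0" "X$2$1 * X$1$2 + X$2$2 * X$2$2 = 0"
    using assms(1) by (simp_all add: ent)
  show ?thesis
  proof (cases "X$2$1 = 0")
    case True
    then have p: "X$1$1 = 0" "X$2$2 = 0" using e by auto
    then have q: "X$1$2 \<noteq> 0" using True assms(2) by (auto simp: vec_eq_iff forall_2)
    have "invertible (mk2 (X$1$2) 0 0 1)" using q by (intro inv_det) (simp add: det_2)
    moreover have "mk2 (X$1$2) 0 0 1 ** J2 = X ** mk2 (X$1$2) 0 0 1"
      using True p by (simp add: ent J2_def)
    ultimately show ?thesis by blast
  next
    case False
    have "invertible (mk2 (X$1$1) 1 (X$2$1) 0)" using False by (intro inv_det) (simp add: det_2)
    moreover have "mk2 (X$1$1) 1 (X$2$1) 0 ** J2 = X ** mk2 (X$1$1) 1 (X$2$1) 0"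
      using e by (simp add: ent J2_def algebra_simps)
    ultimately show ?thesis by blast
  qed
qed

lemma Pow_Suc: "((\<lambda>M. X ** M) ^^ Suc n) (mat 1) = X ** ((\<lambda>M. X ** M) ^^ n) (mat 1)"
  by simp

lemma nil_iff: "(X::'k::field^2^2) \<in> nilcone \<longleftrightarrow> X ** X = 0"
proof
  assume "X ** X = 0"
  then have "((\<lambda>M. X ** M) ^^ 2) (mat 1) = 0" by (simp add: numeral_2_eq_2)
  then show "X \<in> nilcone" unfolding nilcone_def by blast
next
  assume "X \<in> nilcone"
  then obtain n where n: "((\<lambda>M. X ** M) ^^ n) (mat 1) = 0" unfolding nilcone_def by blast
  define P where "P = (\<lambda>n. ((\<lambda>M. X ** M) ^^ n) (mat 1))"
  have Ps: "P (Suc m) = X ** P m" for m unfolding P_def by simp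
  have dP: "det (P m) = det X ^ m" for m
    by (induction m) (simp_all add: Ps det_mul P_def det_I)
  have "det (P n) = 0" using n by (simp add: P_def det_2)
  then have n0: "n \<noteq> 0" and d: "det X = 0" using dP by (auto simp: det_I P_def)
  define t where "t = X$1$1 + X$2$2"
  have CH: "X ** X = (\<chi> i j. t * X$i$j)" using d by (simp add: ent t_def algebra_simps)
  have Pk: "P (Suc m) $ i $ j = t^m * X$i$j" for m i j
  proof (induction m arbitrary: i j)
    case 0 then show ?case by (simp add: Ps P_def)
  next
    case (Suc m)
    have "P (Suc (Suc m)) $ i $ j = (\<Sum>k\<in>UNIV. X$i$k * P (Suc m) $ k $ j)"
      by (simp add: Ps[of "Suc m"] matrix_matrix_mult_def)
    also have "\<dots> = t^m * (\<Sum>k\<in>UNIV. X$i$k * X$k$j)" by (simp add: Suc sum_distrib_left algebra_simps)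
    also have "\<dots> = t^m * (X ** X)$i$j" by (simp add: matrix_matrix_mult_def)
    also have "\<dots> = t^(Suc m) * X$i$j" by (simp add: CH)
    finally show ?case .
  qed
  obtain m where m: "n = Suc m" using n0 by (cases n) auto
  have "t^m * X$i$j = 0" for i j using Pk[of m i j] n by (simp add: m P_def)
  then have "t = 0 \<or> X = 0" by (auto simp: vec_eq_iff)
  then show "X ** X = 0" using CH by (auto simp: vec_eq_iff)
qed


lemma mzero_l[simp]: "(0::'a::semiring_1^'n^'m) ** (A::'a^'p^'n) = 0"
  by (simp add: matrix_matrix_mult_def vec_eq_iff)
lemma mzero_r[simp]: "(A::'a::semiring_1^'n^'m) ** (0::'a^'p^'n) = 0"
  by (simp add: matrix_matrix_mult_def vec_eq_iff)

lemma sep: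
  assumes "\<And>x. x \<in> semi_orbit (p :: ('k::field^2^2) \<times> ('k^3)) \<Longrightarrow> x \<noteq> q"
  shows "semi_orbit p \<noteq> semi_orbit q \<and> semi_orbit p \<inter> semi_orbit q = {}"
proof
  show "semi_orbit p \<noteq> semi_orbit q" using assms orbit_refl[of q] by blast
  show "semi_orbit p \<inter> semi_orbit q = {}"
  proof (rule ccontr)
    assume "semi_orbit p \<inter> semi_orbit q \<noteq> {}"
    then obtain z where "z \<in> semi_orbit p" "z \<in> semi_orbit q" by blast
    then have "semi_orbit p = semi_orbit q" using orbit_eq by metis
    then show False using assms orbit_refl[of q] by blast
  qed
qed

lemma X0_orb: "invertible (g::'k::field^2^2) \<Longrightarrow> (0, rho g e) \<in> semi_orbit (0, e)"
  unfolding semi_orbit_def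
  by (rule CollectI, rule exI[of _ g], rule exI[of _ 0]) (simp add: Ad_eq drho_0)

lemma orb_0: "x \<in> semi_orbit ((0::'k::field^2^2), e) \<Longrightarrow> \<exists>g. invertible g \<and> x = (0, rho g e)"
  unfolding semi_orbit_def by (auto simp: Ad_eq drho_00)

lemma orb_nil: assumes "x \<in> semi_orbit ((X::'k::field^2^2), e)" "X ** X = 0"
  shows "fst x ** fst x = 0"
proof -
  obtain g v where g: "invertible g" and x: "x = Ad_semi (g, v) (X, e)" using assms(1) unfolding semi_orbit_def by blast
  have "g ** X ** matrix_inv g ** (g ** X ** matrix_inv g) = g ** X ** (matrix_inv g ** g) ** X ** matrix_inv g"
    by (simp add: matrix_mul_assoc)
  also have "\<dots> = g ** (X ** X) ** matrix_inv g" using inv_lr[OF g] by (simp add: matrix_mul_assoc)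
  also have "\<dots> = 0" using assms(2) by simp
  finally show ?thesis by (simp add: x Ad_eq)
qed


lemma J2_sq: "(J2::'k::field^2^2) ** J2 = 0"
  by (simp add: ent J2_def)
lemma J2_nz: "(J2::'k::field^2^2) \<noteq> 0"
  by (simp add: vec_eq_iff J2_def forall_2)

lemma J2_orb:
  fixes c :: "'k::{alg_closed_field, field_char_0}" and w :: "'k^3"
  assumes c: "c \<noteq> 0"
  shows "(J2, w) \<in> semi_orbit (J2, 0) \<or> (J2, w) \<in> semi_orbit (J2, vector [0,0,c])"
proof -
  have z3: "vector [0,0,0] = (0::'k^3)" by (simp add: vec_eq_iff forall_3)
  define u :: "'k^3" where "u = vector [0, - w$1, - w$2 / 2]"
  have du: "- drho J2 u + vector [0, 0, w$3] = w"
    by (simp add: u_def ent J2_def)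
  show ?thesis
  proof (cases "w$3 = 0")
    case True
    have e: "Ad_semi (mat 1, u) (J2, 0) = (J2, w)"
      using du True by (simp add: Ad_eq minv_id rho_0 z3)
    have "invertible (mat 1 :: 'k^2^2)" by (simp add: invertible_det_nz det_I)
    then have "(J2, w) \<in> semi_orbit (J2, 0)" using e[symmetric] unfolding semi_orbit_def by blast
    then show ?thesis by blast
  next
    case False
    obtain s where s: "s^2 = w$3 / c" using sqrt_ex by blast
    have s0: "s \<noteq> 0" using s False c by auto
    have mi: "matrix_inv (mat s :: 'k^2^2) = mat (1/s)"
      by (rule minv_unique) (use s0 in \<open>simp_all add: ent\<close>)
    have cj: "mat s ** J2 ** mat (1/s) = (J2 :: 'k^2^2)"
      using s0 by (simp add: ent J2_def)
    have r: "rho (mat s) (vector [0,0,c]) = vector [0, 0, w$3]"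
      using s c by (simp add: ent power2_eq_square)
    have e: "Ad_semi (mat s, u) (J2, vector [0,0,c]) = (J2, w)"
      using du by (simp add: Ad_eq mi cj r)
    have "invertible (mat s :: 'k^2^2)" using s0 by (simp add: invertible_det_nz det_2 mat_def)
    then have "(J2, w) \<in> semi_orbit (J2, vector [0,0,c])" using e[symmetric] unfolding semi_orbit_def by blast
    then show ?thesis by blast
  qed
qed

lemma card5: "a \<noteq> b \<Longrightarrow> a \<noteq> c \<Longrightarrow> a \<noteq> d \<Longrightarrow> a \<noteq> e \<Longrightarrow> b \<noteq> c \<Longrightarrow>
  b \<noteq> d \<Longrightarrow> b \<noteq> e \<Longrightarrow> c \<noteq> d \<Longrightarrow> c \<noteq> e \<Longrightarrow> d \<noteq> e \<Longrightarrow> card {a, b, c, d, e} = 5"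
  by simp

lemma pw_ins: "(\<forall>y\<in>s. r x y \<and> r y x) \<Longrightarrow> pairwise r s \<Longrightarrow> pairwise r (insert x s)"
  unfolding pairwise_insert by blast

lemma disj5:
  assumes "disjnt a b" "disjnt a c" "disjnt a d" "disjnt a e" "disjnt b c"
    "disjnt b d" "disjnt b e" "disjnt c d" "disjnt c e" "disjnt d e"
  shows "disjoint {a, b, c, d, e}"
proof -
  note s = assms assms[THEN disjnt_sym]
  show ?thesis
    apply (intro pw_ins pairwise_singleton)
    apply (simp_all only: ball_simps s simp_thms pairwise_empty)
    done
qed

theorem lemma2p1:
  fixes v0 :: "'k::{alg_closed_field, field_char_0} ^ 3"
  assumes "lowest_weight_vector v0"
  defines "v1 \<equiv> drho J2 v0"
  defines "v2 \<equiv> drho J2 v1"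
  defines "O1 \<equiv> semi_orbit (0, 0)"
      and "O2 \<equiv> semi_orbit (0, v0)"
      and "O3 \<equiv> semi_orbit (0, v0 + v2)"
      and "O4 \<equiv> semi_orbit (J2, 0)"
      and "O5 \<equiv> semi_orbit (J2, v0)"
  shows "nilcone \<times> UNIV = O1 \<union> O2 \<union> O3 \<union> O4 \<union> O5 \<and>
         {semi_orbit p | p. p \<in> nilcone \<times> UNIV} = {O1, O2, O3, O4, O5} \<and>
         card {O1, O2, O3, O4, O5} = 5 \<and>
         disjoint {O1, O2, O3, O4, O5}"
proof -
  define c where "c = v0$3"
  have lw: "v0 \<noteq> 0" "drho E21 v0 = 0" using assms(1) unfolding lowest_weight_vector_def by auto
  have a0: "v0$1 = 0" "v0$2 = 0" using lw(2) by (simp_all add: ent E21_def)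
  have c0: "c \<noteq> 0" using lw(1) a0 by (auto simp: c_def vec_eq_iff forall_3)
  have v0e: "v0 = vector [0,0,c]" using a0 by (simp add: c_def vec_eq_iff forall_3)
  have v02: "v0 + v2 = vector [2*c, 0, c]" unfolding v2_def v1_def v0e by (simp add: ent J2_def)
  define e3 :: "'k^3" where "e3 = vector [0,0,1]"
  define e2 :: "'k^3" where "e2 = vector [0,1,0]"
  have O2e: "O2 = semi_orbit (0, e3)"
  proof -
    obtain g where "invertible g" "rho g e3 = v0" using rank1_ex[of v0] lw(1) a0 e3_def by auto
    then show ?thesis unfolding O2_def using X0_orb orbit_eq by metis
  qed
  have O3e: "O3 = semi_orbit (0, e2)"
  proof -
    have "((v0+v2)$2)^2 \<noteq> 4 * (v0+v2)$1 * (v0+v2)$3" using c0 by (simp add: v02)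
    then obtain g where "invertible g" "rho g e2 = v0 + v2" using rank2_ex[of "v0+v2"] e2_def by auto
    then show ?thesis unfolding O3_def using X0_orb orbit_eq by metis
  qed
  have O5e: "O5 = semi_orbit (J2, vector [0,0,c])" unfolding O5_def v0e ..
  have cover: "(X, w) \<in> O1 \<union> O2 \<union> O3 \<union> O4 \<union> O5" if X: "X ** X = 0" for X w
  proof (cases "X = 0")
    case True
    show ?thesis
    proof (cases "w = 0")
      case True
      then show ?thesis using \<open>X = 0\<close> orbit_refl unfolding O1_def by blast
    next
      case False
      show ?thesis
      proof (cases "(w$2)^2 = 4 * w$1 * w$3")
        case True
        then obtain g where "invertible g" "rho g e3 = w" using rank1_ex[of w] False e3_def by auto
        then have "(X, w) \<in> O2" unfolding O2e using X0_orb \<open>X = 0\<close> by metis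
        then show ?thesis by blast
      next
        case F: False
        then obtain g where "invertible g" "rho g e2 = w" using rank2_ex[of w] e2_def by auto
        then have "(X, w) \<in> O3" unfolding O3e using X0_orb \<open>X = 0\<close> by metis
        then show ?thesis by blast
      qed
    qed
  next
    case False
    obtain g where g: "invertible g" and gJ: "g ** J2 = X ** g" using nil_J[OF X False] by blast
    have conj: "g ** J2 ** matrix_inv g = X"
      using gJ inv_lr[OF g] by (metis matrix_mul_assoc matrix_mul_rid)
    define w' where "w' = rho (matrix_inv g) w"
    have adx: "Ad_semi (g, 0) (J2, w') = (X, w)"
      using inv_lr[OF g] by (simp add: Ad_eq conj drho_0 w'_def rho_hom rho_id)
    have Xin: "(X, w) \<in> semi_orbit (J2, w')" using g adx[symmetric] unfolding semi_orbit_def by blast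
    have "(J2, w') \<in> O4 \<or> (J2, w') \<in> O5" using J2_orb[OF c0, of w'] unfolding O4_def O5e .
    then have "semi_orbit (J2, w') = O4 \<or> semi_orbit (J2, w') = O5"
      unfolding O4_def O5e by (elim disjE) (simp_all add: orbit_eq)
    then show ?thesis using Xin by (elim disjE) simp_all
  qed
  have cover2: "nilcone \<times> UNIV = O1 \<union> O2 \<union> O3 \<union> O4 \<union> O5"
  proof
    show "nilcone \<times> UNIV \<subseteq> O1 \<union> O2 \<union> O3 \<union> O4 \<union> O5"
    proof
      fix p :: "('k^2^2) \<times> ('k^3)" assume "p \<in> nilcone \<times> UNIV"
      then obtain X w where "p = (X, w)" "X ** X = 0" by (cases p) (auto simp: nil_iff)
      then show "p \<in> O1 \<union> O2 \<union> O3 \<union> O4 \<union> O5" using cover by blast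
    qed
    show "O1 \<union> O2 \<union> O3 \<union> O4 \<union> O5 \<subseteq> nilcone \<times> UNIV"
      unfolding O1_def O2_def O3_def O4_def O5_def
      using orb_nil[where X = "0::'k^2^2"] orb_nil[where X = "J2::'k^2^2", OF _ J2_sq]
      by (force simp: nil_iff)
  qed
  have s12: "O1 \<noteq> O2 \<and> O1 \<inter> O2 = {}" unfolding O1_def O2_def
    by (rule sep) (use lw(1) in \<open>auto dest!: orb_0 simp: rho_0\<close>)
  have s13: "O1 \<noteq> O3 \<and> O1 \<inter> O3 = {}" unfolding O1_def O3_def
    by (rule sep) (use c0 in \<open>auto dest!: orb_0 simp: rho_0 v02 vec_eq_iff forall_3\<close>)
  have s23: "O2 \<noteq> O3 \<and> O2 \<inter> O3 = {}" unfolding O2_def O3_def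
  proof (rule sep)
    fix x :: "('k^2^2) \<times> ('k^3)" assume "x \<in> semi_orbit (0, v0)"
    then obtain g where x: "x = (0, rho g v0)" using orb_0 by blast
    show "x \<noteq> (0, v0 + v2)"
    proof
      assume "x = (0, v0 + v2)"
      then have "rho g v0 = vector [2*c, 0, c]" using x v02 by simp
      then have e: "c * (g$1$2)^2 = 2 * c" "2 * c * g$1$2 * g$2$2 = 0" "c * (g$2$2)^2 = c"
        by (simp_all add: v0e ent algebra_simps)
      then show False using c0 by (auto simp: power2_eq_square)
    qed
  qed
  have sJ: "semi_orbit (0, a) \<noteq> semi_orbit (J2, b) \<and> semi_orbit (0, a) \<inter> semi_orbit (J2, b) = {}"
    for a b :: "'k^3"
    by (rule sep) (use J2_nz in \<open>auto dest!: orb_0\<close>)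
  have s45: "O4 \<noteq> O5 \<and> O4 \<inter> O5 = {}" unfolding O4_def O5e
  proof (rule sep)
    fix x :: "('k^2^2) \<times> ('k^3)" assume "x \<in> semi_orbit (J2, 0)"
    then obtain g v where x: "x = Ad_semi (g, v) (J2, 0)" unfolding semi_orbit_def by blast
    show "x \<noteq> (J2, vector [0,0,c])"
    proof
      assume xe: "x = (J2, vector [0,0,c])"
      have f1: "fst x = J2" "snd x = vector [0,0,c]" using xe by simp_all
      have f3: "fst x = g ** J2 ** matrix_inv g" "snd x = - drho (g ** J2 ** matrix_inv g) v"
        by (simp_all add: x Ad_eq rho_0)
      have "- drho J2 v = vector [0,0,c]" using f1 f3 by metis
      then have "(- drho J2 v) $ 3 = c" by simp
      then show False using c0 by (simp add: ent J2_def)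
    qed
  qed
  have s14: "O1 \<noteq> O4 \<and> O1 \<inter> O4 = {}" unfolding O1_def O4_def by (rule sJ)
  have s15: "O1 \<noteq> O5 \<and> O1 \<inter> O5 = {}" unfolding O1_def O5_def by (rule sJ)
  have s24: "O2 \<noteq> O4 \<and> O2 \<inter> O4 = {}" unfolding O2_def O4_def by (rule sJ)
  have s25: "O2 \<noteq> O5 \<and> O2 \<inter> O5 = {}" unfolding O2_def O5_def by (rule sJ)
  have s34: "O3 \<noteq> O4 \<and> O3 \<inter> O4 = {}" unfolding O3_def O4_def by (rule sJ)
  have s35: "O3 \<noteq> O5 \<and> O3 \<inter> O5 = {}" unfolding O3_def O5_def by (rule sJ)
  note ss = s12 s13 s14 s15 s23 s24 s25 s34 s35 s45
  have ne: "O1 \<noteq> O2" "O1 \<noteq> O3" "O1 \<noteq> O4" "O1 \<noteq> O5" "O2 \<noteq> O3"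
    "O2 \<noteq> O4" "O2 \<noteq> O5" "O3 \<noteq> O4" "O3 \<noteq> O5" "O4 \<noteq> O5"
    using ss by blast+
  have card: "card {O1, O2, O3, O4, O5} = 5" by (rule card5) (rule ne)+
  have dj: "disjnt O1 O2" "disjnt O1 O3" "disjnt O1 O4" "disjnt O1 O5" "disjnt O2 O3"
    "disjnt O2 O4" "disjnt O2 O5" "disjnt O3 O4" "disjnt O3 O5" "disjnt O4 O5"
    using ss by (simp_all add: disjnt_def)
  have disj: "disjoint {O1, O2, O3, O4, O5}" by (rule disj5) (rule dj)+
  have img: "{semi_orbit p | p. p \<in> nilcone \<times> UNIV} = {O1, O2, O3, O4, O5}"
  proof
    show "{semi_orbit p | p. p \<in> nilcone \<times> UNIV} \<subseteq> {O1, O2, O3, O4, O5}"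
    proof
      fix S :: "(('k^2^2) \<times> ('k^3)) set" assume "S \<in> {semi_orbit p | p. p \<in> nilcone \<times> UNIV}"
      then obtain p :: "('k^2^2) \<times> ('k^3)" where S: "S = semi_orbit p" and p: "p \<in> nilcone \<times> UNIV" by blast
      have "p \<in> O1 \<union> O2 \<union> O3 \<union> O4 \<union> O5" using p by (simp only: cover2)
      have oe: "p \<in> O1 \<Longrightarrow> S = O1" "p \<in> O2 \<Longrightarrow> S = O2" "p \<in> O3 \<Longrightarrow> S = O3"
        "p \<in> O4 \<Longrightarrow> S = O4" "p \<in> O5 \<Longrightarrow> S = O5"
        unfolding S O1_def O2_def O3_def O4_def O5_def by (rule orbit_eq; assumption)+
      from \<open>p \<in> O1 \<union> O2 \<union> O3 \<union> O4 \<union> O5\<close> show "S \<in> {O1, O2, O3, O4, O5}"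
        using oe by (elim UnE) simp_all
    qed
    have p0: "(0::'k^2^2) \<in> nilcone" "(J2::'k^2^2) \<in> nilcone" by (simp_all add: nil_iff J2_sq)
    have q: "((0::'k^2^2), (0::'k^3)) \<in> nilcone \<times> UNIV" "((0::'k^2^2), v0) \<in> nilcone \<times> UNIV"
      "((0::'k^2^2), v0 + v2) \<in> nilcone \<times> UNIV"
      "((J2::'k^2^2), (0::'k^3)) \<in> nilcone \<times> UNIV" "((J2::'k^2^2), v0) \<in> nilcone \<times> UNIV" using p0 by simp_all
    show "{O1, O2, O3, O4, O5} \<subseteq> {semi_orbit p | p. p \<in> nilcone \<times> UNIV}"
    proof -
      have "O1 \<in> {semi_orbit p | p. p \<in> nilcone \<times> UNIV}" unfolding O1_def using q(1) by blast
      moreover have "O2 \<in> {semi_orbit p | p. p \<in> nilcone \<times> UNIV}" unfolding O2_def using q(2) by blast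
      moreover have "O3 \<in> {semi_orbit p | p. p \<in> nilcone \<times> UNIV}" unfolding O3_def using q(3) by blast
      moreover have "O4 \<in> {semi_orbit p | p. p \<in> nilcone \<times> UNIV}" unfolding O4_def using q(4) by blast
      moreover have "O5 \<in> {semi_orbit p | p. p \<in> nilcone \<times> UNIV}" unfolding O5_def using q(5) by blast
      ultimately show ?thesis by (simp only: insert_subset empty_subsetI simp_thms)
    qed
  qed
  show ?thesis by (intro conjI cover2 img card disj)
qed

end
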